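(* Let $p$ be a permutation of a finite set of integers, and let the largest letter of $p$ be $m=\max(p)$. Write $p=\alpha m\beta$ and $\alpha=a_1a_2\dotsm a_i$. Define the set $\mathrm{unS}(p)$ recursively by \[ \mathrm{unS}(p) \,=\, \bigcup_{j=0}^i \left\{\, \gamma m\delta \,\colon \gamma\in\mathrm{unS}(a_1a_2\dotsm a_j),\, \delta\in\mathrm{unS}(a_{j+1}\dotsm a_i\beta) \,\right\} \] (with $\mathrm{unS}$ of the empty word being the set containing only the empty word). Then $\mathrm{unS}(p)$ contains all classical patterns (up to standardization) that can become $p$ after one pass of stack-sort.
   Context: A pass of stack-sort $S$: the entries of a permutation are read left to right and pushed onto a stack, where the elements on the stack must always be increasing from top to bottom; before pushing an entry, any smaller-than-needed entries, i.e. every entry on top of the stack smaller than the incoming entry, are popped to the output; at the end the stack is emptied to the output. $\mathrm{unS}(p)$ is the list of candidate patterns, i.e. orderings of the letters of $p$ possible prior to sorting. A classical pattern is a permutation; a permutation contains it if some subsequence standardizes to it. *)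

theory Defs
  imports Main
begin

text \<open>The stack is a list with its top at the head.\<close>
fun stack_pass :: "int list \<Rightarrow> int list \<Rightarrow> int list" where
  "stack_pass st [] = st"
| "stack_pass st (x # xs) =
     takeWhile (\<lambda>y. y < x) st @ stack_pass (x # dropWhile (\<lambda>y. y < x) st) xs"

definition stack_sort :: "int list \<Rightarrow> int list" where
  "stack_sort q = stack_pass [] q"

lemma takeWhile_len_lt: "m \<in> set p \<Longrightarrow> length (takeWhile (\<lambda>x. x \<noteq> m) p) < length p"
  by (induction p) auto

lemma takeWhile_dropWhile_len:
  "m \<in> set p \<Longrightarrow> length (takeWhile (\<lambda>x. x \<noteq> m) p) + length (tl (dropWhile (\<lambda>x. x \<noteq> m) p)) < length p"
  by (induction p) auto

function unS :: "int list \<Rightarrow> int list set" where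
  "unS [] = {[]}"
| "unS (x # xs) =
    (let p = x # xs; m = Max (set p);
         \<alpha> = takeWhile (\<lambda>y. y \<noteq> m) p;
         \<beta> = tl (dropWhile (\<lambda>y. y \<noteq> m) p)
     in \<Union> (set (map (\<lambda>j. (\<lambda>(\<gamma>, \<delta>). \<gamma> @ [m] @ \<delta>) `
                          (unS (take j \<alpha>) \<times> unS (drop j \<alpha> @ \<beta>)))
                 [0..<Suc (length \<alpha>)])))"
  by pat_completeness auto
termination
proof (relation "measure length")
  fix x :: int and xs p m \<alpha> j
  assume h: "p = x # xs" "m = Max (set p)" "\<alpha> = takeWhile (\<lambda>y. y \<noteq> m) p"
  have mem: "m \<in> set p" unfolding h(2) by (rule Max_in) (simp_all add: h(1))
  show "(take j \<alpha>, x # xs) \<in> measure length"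
    using takeWhile_len_lt[OF mem] h by auto
next
  fix x :: int and xs p m \<alpha> \<beta> j
  assume h: "p = x # xs" "m = Max (set p)" "\<alpha> = takeWhile (\<lambda>y. y \<noteq> m) p"
     "\<beta> = tl (dropWhile (\<lambda>y. y \<noteq> m) p)"
  have mem: "m \<in> set p" unfolding h(2) by (rule Max_in) (simp_all add: h(1))
  show "(drop j \<alpha> @ \<beta>, x # xs) \<in> measure length"
    using takeWhile_dropWhile_len[OF mem] h by auto
qed auto

end

theory Submission
  imports Defs "HOL-Library.Multiset"
begin

lemma sp_mset: "mset (stack_pass st q) = mset st + mset q"
proof (induction q arbitrary: st)
  case Nil then show ?case by simp
next
  case (Cons x xs)
  have "mset (takeWhile (\<lambda>y. y < x) st) + mset (dropWhile (\<lambda>y. y < x) st) = mset st"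
    by (metis mset_append takeWhile_dropWhile_id)
  then show ?case using Cons by (simp add: add.commute add.left_commute)
qed

lemma sp_app:
  "\<exists>out st'. stack_pass st g = out @ st' \<and> (\<forall>zs. stack_pass st (g @ zs) = out @ stack_pass st' zs)
     \<and> set st' \<subseteq> set st \<union> set g"
proof (induction g arbitrary: st)
  case Nil
  show ?case by (rule exI[of _ "[]"], rule exI[of _ st]) simp
next
  case (Cons x xs)
  obtain out st' where h: "stack_pass (x # dropWhile (\<lambda>y. y < x) st) xs = out @ st'"
    "\<forall>zs. stack_pass (x # dropWhile (\<lambda>y. y < x) st) (xs @ zs) = out @ stack_pass st' zs"
    "set st' \<subseteq> set (x # dropWhile (\<lambda>y. y < x) st) \<union> set xs"
    using Cons.IH by blast
  have "set (dropWhile (\<lambda>y. y < x) st) \<subseteq> set st" by (simp add: set_dropWhileD subsetI)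
  then show ?case
    by (intro exI[of _ "takeWhile (\<lambda>y. y < x) st @ out"] exI[of _ st']) (use h in auto)
qed

lemma sp_max:
  assumes "\<forall>y\<in>set st. y < m" "\<forall>y\<in>set d. y < m"
  shows "stack_pass (st @ [m]) d = stack_pass st d @ [m]"
  using assms
proof (induction d arbitrary: st)
  case Nil then show ?case by simp
next
  case (Cons x xs)
  have xm: "x < m" using Cons.prems by simp
  have t: "takeWhile (\<lambda>y. y < x) (st @ [m]) = takeWhile (\<lambda>y. y < x) st"
    using xm by (simp add: takeWhile_append) (metis takeWhile_eq_all_conv)
  have d: "dropWhile (\<lambda>y. y < x) (st @ [m]) = dropWhile (\<lambda>y. y < x) st @ [m]"
    using xm by (simp add: dropWhile_append)
  have A: "\<forall>y\<in>set (x # dropWhile (\<lambda>y. y < x) st). y < m"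
    using Cons.prems by (auto dest: set_dropWhileD)
  then have "stack_pass ((x # dropWhile (\<lambda>y. y < x) st) @ [m]) xs
      = stack_pass (x # dropWhile (\<lambda>y. y < x) st) xs @ [m]"
    using Cons.IH[OF A] Cons.prems by simp
  then show ?case using t d by simp
qed

lemma ss_split:
  assumes "\<forall>y\<in>set g. y < m" "\<forall>y\<in>set d. y < m"
  shows "stack_sort (g @ m # d) = stack_sort g @ stack_sort d @ [m]"
proof -
  obtain out st' where h: "stack_pass [] g = out @ st'"
    "\<forall>zs. stack_pass [] (g @ zs) = out @ stack_pass st' zs" "set st' \<subseteq> set [] \<union> set g"
    using sp_app by blast
  have lt: "\<forall>y\<in>set st'. y < m" using h(3) assms(1) by auto
  have tw: "takeWhile (\<lambda>y. y < m) st' = st'" using lt by (simp add: takeWhile_eq_all_conv)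
  have dw: "dropWhile (\<lambda>y. y < m) st' = []" using lt by (simp add: dropWhile_eq_Nil_conv)
  have "stack_pass [] (g @ m # d) = out @ stack_pass st' (m # d)"
    using h(2) by blast
  also have "stack_pass st' (m # d) = takeWhile (\<lambda>y. y < m) st' @ stack_pass (m # dropWhile (\<lambda>y. y < m) st') d"
    by (rule stack_pass.simps(2))
  also have "\<dots> = st' @ stack_pass [m] d" by (simp only: tw dw)
  finally have "stack_pass [] (g @ m # d) = out @ st' @ stack_pass [m] d" .
  also have "stack_pass [m] d = stack_pass [] d @ [m]"
    using sp_max[of "[]" m d] assms by simp
  finally show ?thesis using h(1) unfolding stack_sort_def by simp
qed

lemma split_at:
  assumes mq: "m \<in> set q"
  shows "q = takeWhile (\<lambda>y. y \<noteq> m) q @ m # tl (dropWhile (\<lambda>y. y \<noteq> m) q)"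
proof -
  have dne: "dropWhile (\<lambda>y. y \<noteq> m) q \<noteq> []" using mq by (simp add: dropWhile_eq_Nil_conv)
  have hd: "hd (dropWhile (\<lambda>y. y \<noteq> m) q) = m" using hd_dropWhile[OF dne] by simp
  have e: "dropWhile (\<lambda>y. y \<noteq> m) q = m # tl (dropWhile (\<lambda>y. y \<noteq> m) q)"
    using dne hd by (metis list.collapse)
  show ?thesis using takeWhile_dropWhile_id[of "\<lambda>y. y \<noteq> m" q] e by simp
qed

lemma main: "distinct q \<Longrightarrow> q \<in> unS (stack_sort q)"
proof (induction "length q" arbitrary: q rule: less_induct)
  case less
  show ?case
  proof (cases q)
    case Nil then show ?thesis by (simp add: stack_sort_def)
  next
    case (Cons a as)
    define m where "m = Max (set q)"
    have ne: "set q \<noteq> {}" using Cons by simp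
    have mq: "m \<in> set q" unfolding m_def by (rule Max_in[OF finite_set ne])
    define g where "g = takeWhile (\<lambda>y. y \<noteq> m) q"
    define d where "d = tl (dropWhile (\<lambda>y. y \<noteq> m) q)"
    have qs: "q = g @ m # d" unfolding g_def d_def by (rule split_at[OF mq])
    have dq: "distinct q" by fact
    have mg: "m \<notin> set g" "m \<notin> set d" using dq qs by auto
    have le: "\<forall>y\<in>set q. y \<le> m" unfolding m_def using Max_ge[OF finite_set] by blast
    have gl: "\<forall>y\<in>set g. y < m"
    proof
      fix y assume y: "y \<in> set g"
      have "y \<in> set q" by (subst qs) (simp add: y)
      then have "y \<le> m" using le by blast
      moreover have "y \<noteq> m" using y mg by blast
      ultimately show "y < m" by simp
    qed
    have dl: "\<forall>y\<in>set d. y < m"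
    proof
      fix y assume y: "y \<in> set d"
      have "y \<in> set q" by (subst qs) (simp add: y)
      then have "y \<le> m" using le by blast
      moreover have "y \<noteq> m" using y mg by blast
      ultimately show "y < m" by simp
    qed
    have ss: "stack_sort (g @ m # d) = stack_sort g @ stack_sort d @ [m]"
      using ss_split gl dl by blast
    have msg: "mset (stack_sort g) = mset g" and msd: "mset (stack_sort d) = mset d"
      unfolding stack_sort_def by (simp_all add: sp_mset)
    have sgs: "set (stack_sort g) = set g" "set (stack_sort d) = set d"
      using msg msd by (metis set_mset_mset)+
    have lgq: "length g < length q" "length d < length q" using qs by simp_all
    have dgd: "distinct g" "distinct d" using dq qs by simp_all
    have IHg: "g \<in> unS (stack_sort g)" using less.hyps[OF lgq(1) dgd(1)] .
    have IHd: "d \<in> unS (stack_sort d)" using less.hyps[OF lgq(2) dgd(2)] .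
    define p where "p = stack_sort g @ stack_sort d @ [m]"
    obtain x xs where px: "p = x # xs"
      unfolding p_def by (cases "stack_sort g @ stack_sort d @ [m]") auto
    have maxp: "Max (set p) = m"
      unfolding p_def using sgs gl dl by (intro Max_eqI) auto
    have mn: "m \<notin> set (stack_sort g @ stack_sort d)" using sgs mg by simp
    have al: "takeWhile (\<lambda>y. y \<noteq> m) p = stack_sort g @ stack_sort d"
      unfolding p_def using mn by (simp add: takeWhile_append)
    have be: "tl (dropWhile (\<lambda>y. y \<noteq> m) p) = []"
      unfolding p_def using mn by (simp add: dropWhile_append)
    have lg: "length (stack_sort g) = length g" using msg by (metis size_mset)
    let ?j = "length g"
    have jin: "?j \<in> set [0..<Suc (length (stack_sort g @ stack_sort d))]" using lg by simp
    have "q \<in> (\<lambda>(\<gamma>, \<delta>). \<gamma> @ [m] @ \<delta>) `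
          (unS (take ?j (stack_sort g @ stack_sort d)) \<times> unS (drop ?j (stack_sort g @ stack_sort d) @ []))"
      using IHg IHd lg qs by (auto intro!: image_eqI[of _ _ "(g, d)"])
    then have "q \<in> unS p" unfolding px
      apply (simp only: unS.simps Let_def)
      using px maxp al be jin by (auto simp del: upt_Suc)
    then show ?thesis using ss qs p_def by simp
  qed
qed

theorem proposition4p1:
  fixes p q :: "int list"
  assumes "distinct p"
    and "stack_sort q = p"
  shows "q \<in> unS p"
proof -
  have "mset p = mset q" using assms(2) unfolding stack_sort_def by (auto simp: sp_mset)
  then have "distinct q" using assms(1) by (metis mset_eq_imp_distinct_iff)
  then show ?thesis using main assms(2) by blast
qed

end
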